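(* Let $X$ be a Tychonoff pseudocompact space and $Y$ any space. Then $\mathsf{EC_{cl}}(X,Y)\Leftrightarrow\mathsf{EC_{cpt}}(X,Y)$.
   Context: All spaces are Hausdorff and maps continuous. A space is pseudocompact if every continuous real-valued function on it is bounded. For a non-Lindelöf space $X$ and a space $Y$: $\mathsf{EC_{cl}}(X,Y)$ means that for every continuous $f:X\to Y$ there is a closed Lindelöf $Z\subset X$ with $f(X\setminus Z)$ a singleton; $\mathsf{EC_{cpt}}(X,Y)$ is the same with "compact" in place of "closed Lindelöf". *)

theory Defs
  imports "HOL-Analysis.Analysis"
begin

definition pseudocompact_space :: "'a topology \<Rightarrow> bool" where
  "pseudocompact_space X \<equiv>
     \<forall>f::'a \<Rightarrow> real. continuous_map X euclideanreal f \<longrightarrow> bounded (f ` topspace X)"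

definition EC_cl :: "'a topology \<Rightarrow> 'b topology \<Rightarrow> bool" where
  "EC_cl X Y \<equiv>
     \<forall>f. continuous_map X Y f \<longrightarrow>
       (\<exists>Z. closedin X Z \<and> Lindelof_space (subtopology X Z) \<and>
            (\<exists>y. f ` (topspace X - Z) = {y}))"

definition EC_cpt :: "'a topology \<Rightarrow> 'b topology \<Rightarrow> bool" where
  "EC_cpt X Y \<equiv>
     \<forall>f. continuous_map X Y f \<longrightarrow>
       (\<exists>Z. compactin X Z \<and> (\<exists>y. f ` (topspace X - Z) = {y}))"

end

theory Submission
  imports Defs
begin

lemma continuous_map_local_real:
  assumes "\<And>z. z \<in> topspace X \<Longrightarrow> \<exists>N s. openin X N \<and> z \<in> N \<and> continuous_map X euclideanreal s \<and> (\<forall>y\<in>N. g y = s y)"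
  shows "continuous_map X euclideanreal (g::'a \<Rightarrow> real)"
  unfolding continuous_map_def
proof (intro conjI allI impI)
  show "g \<in> topspace X \<rightarrow> topspace euclideanreal" by simp
  fix V :: "real set" assume V: "openin euclideanreal V"
  show "openin X {x \<in> topspace X. g x \<in> V}"
  proof (subst openin_subopen, intro ballI)
    fix z assume z: "z \<in> {x \<in> topspace X. g x \<in> V}"
    then obtain N s where N: "openin X N" "z \<in> N" and s: "continuous_map X euclideanreal s" and eq: "\<forall>y\<in>N. g y = s y"
      using assms by blast
    have "openin X {x \<in> topspace X. s x \<in> V}"
      using s V by (simp add: continuous_map_def)
    then have "openin X (N \<inter> {x \<in> topspace X. s x \<in> V})" using N by blast
    moreover have "z \<in> N \<inter> {x \<in> topspace X. s x \<in> V}" using z N eq by auto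
    moreover have "N \<inter> {x \<in> topspace X. s x \<in> V} \<subseteq> {x \<in> topspace X. g x \<in> V}" using eq by auto
    ultimately show "\<exists>T. openin X T \<and> z \<in> T \<and> T \<subseteq> {x \<in> topspace X. g x \<in> V}" by blast
  qed
qed

lemma pseudo_lf:
  assumes crs: "completely_regular_space X" and pc: "pseudocompact_space X"
    and G: "\<And>n. openin X (G n)" and x: "\<And>n::nat. x n \<in> G n"
    and lf: "\<And>z. z \<in> topspace X \<Longrightarrow> \<exists>N F. openin X N \<and> z \<in> N \<and> finite F \<and> (\<forall>y\<in>N. \<forall>n. y \<in> G n \<longrightarrow> n \<in> F)"
  shows False
proof -
  have "\<forall>n. \<exists>f::'a\<Rightarrow>real. continuous_map X (top_of_set {0..1}) f \<and> f (x n) = 0 \<and> f ` (topspace X - G n) \<subseteq> {1}"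
  proof
    fix n
    have "closedin X (topspace X - G n)" using G by blast
    moreover have "x n \<in> topspace X - (topspace X - G n)" using x[of n] openin_subset[OF G[of n]] by blast
    ultimately show "\<exists>f::'a\<Rightarrow>real. continuous_map X (top_of_set {0..1}) f \<and> f (x n) = 0 \<and> f ` (topspace X - G n) \<subseteq> {1}"
      using crs[unfolded completely_regular_space_def, rule_format, of "topspace X - G n" "x n"] by blast
  qed
  from choice[OF this] obtain f :: "nat \<Rightarrow> 'a \<Rightarrow> real" where fall: "\<forall>n. continuous_map X (top_of_set {0..1}) (f n) \<and> f n (x n) = 0 \<and> f n ` (topspace X - G n) \<subseteq> {1}"
    by blast
  then have f: "\<And>n. continuous_map X (top_of_set {0..1}) (f n)"
    and fx: "\<And>n. f n (x n) = 0" and fG: "\<And>n. f n ` (topspace X - G n) \<subseteq> {1}"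
    by auto
  define h where "h n y = 1 - f n y" for n y
  have hc: "continuous_map X euclideanreal (h n)" for n
  proof -
    have "continuous_map X euclideanreal (f n)"
      using f continuous_map_in_subtopology by blast
    then show ?thesis unfolding h_def by (rule continuous_map_diff[rotated]) simp
  qed
  have h0: "h n y \<ge> 0" if "y \<in> topspace X" for n y
  proof -
    have "f n \<in> topspace X \<rightarrow> topspace (top_of_set {0..1::real})"
      using f[of n] unfolding continuous_map_def by blast
    then have "f n y \<in> topspace (top_of_set {0..1::real})" using that by (rule funcset_mem)
    then have "f n y \<in> {0..1}" by simp
    then show ?thesis unfolding h_def by simp
  qed
  have hx: "h n (x n) = 1" for n using fx by (simp add: h_def)
  have hz: "h n y = 0" if "y \<in> topspace X" "y \<notin> G n" for n y
  proof -
    have "f n y \<in> f n ` (topspace X - G n)" using that by blast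
    then have "f n y = 1" using fG[of n] by blast
    then show ?thesis unfolding h_def by simp
  qed
  define g where "g y = (\<Sum>n\<in>{n. y \<in> G n}. real n * h n y)" for y
  have gc: "continuous_map X euclideanreal g"
  proof (rule continuous_map_local_real)
    fix z assume z: "z \<in> topspace X"
    then obtain N F where N: "openin X N" "z \<in> N" and F: "finite F" and NF: "\<forall>y\<in>N. \<forall>n. y \<in> G n \<longrightarrow> n \<in> F"
      using lf[OF z] by blast
    show "\<exists>N s. openin X N \<and> z \<in> N \<and> continuous_map X euclideanreal s \<and> (\<forall>y\<in>N. g y = s y)"
    proof (intro exI conjI ballI)
      show "continuous_map X euclideanreal (\<lambda>y. \<Sum>n\<in>F. real n * h n y)"
      proof (rule continuous_map_sum[OF F])
        fix i show "continuous_map X euclideanreal (\<lambda>y. real i * h i y)"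
          by (rule continuous_map_real_mult_left[OF hc])
      qed
      fix y assume y: "y \<in> N"
      have yt: "y \<in> topspace X" using N y openin_subset[OF N(1)] by blast
      show "g y = (\<Sum>n\<in>F. real n * h n y)"
        unfolding g_def
      proof (rule sum.mono_neutral_left[OF F])
        show "{n. y \<in> G n} \<subseteq> F" using NF y by blast
        show "\<forall>i\<in>F - {n. y \<in> G n}. real i * h i y = 0" using hz yt by simp
      qed
    qed (use N in auto)
  qed
  then have "bounded (g ` topspace X)" using pc unfolding pseudocompact_space_def by blast
  then obtain B where B: "\<And>y. y \<in> topspace X \<Longrightarrow> \<bar>g y\<bar> \<le> B"
    unfolding bounded_iff by (metis imageI real_norm_def)
  obtain n :: nat where n: "real n > B" using reals_Archimedean2 by blast
  have xt: "x n \<in> topspace X" using x[of n] openin_subset[OF G[of n]] by blast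
  have fin: "finite {m. x n \<in> G m}"
  proof -
    obtain N F where "x n \<in> N" "finite F" "\<forall>y\<in>N. \<forall>m. y \<in> G m \<longrightarrow> m \<in> F"
      using lf[OF xt] by blast
    then have "{m. x n \<in> G m} \<subseteq> F" by blast
    then show ?thesis using \<open>finite F\<close> by (rule finite_subset)
  qed
  have "real n * h n (x n) \<le> g (x n)"
    unfolding g_def
    by (rule member_le_sum) (use fin x xt h0 in simp_all)
  then have "real n \<le> g (x n)" using hx by simp
  with B[OF xt] n show False by linarith
qed


lemma key_compact:
  assumes crs: "completely_regular_space X" and pc: "pseudocompact_space X"
    and U: "openin X U" and lin: "Lindelof_space (subtopology X (X closure_of U))"
  shows "compactin X (X closure_of U)"
proof (rule ccontr)
  define K where "K = X closure_of U"
  assume nc: "\<not> compactin X (X closure_of U)"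
  have Kt: "K \<subseteq> topspace X" unfolding K_def by (rule closure_of_subset_topspace)
  have Ut: "U \<subseteq> topspace X" using U by (rule openin_subset)
  have UK: "U \<subseteq> K" unfolding K_def using Ut by (rule closure_of_subset)
  have Kcl: "closedin X K" unfolding K_def by (rule closedin_closure_of)
  have nc': "\<not> compactin X K" using nc unfolding K_def .
  then have "\<not> (\<forall>\<U>. (\<forall>W\<in>\<U>. openin X W) \<and> K \<subseteq> \<Union>\<U> \<longrightarrow> (\<exists>\<F>. finite \<F> \<and> \<F> \<subseteq> \<U> \<and> K \<subseteq> \<Union>\<F>))"
    using Kt unfolding compactin_def by meson
  then obtain \<U> where \<U>o: "\<forall>W\<in>\<U>. openin X W" and K\<U>: "K \<subseteq> \<Union>\<U>"
    and nf0: "\<not> (\<exists>\<F>. finite \<F> \<and> \<F> \<subseteq> \<U> \<and> K \<subseteq> \<Union>\<F>)"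
    by meson
  have nf: "\<not> K \<subseteq> \<Union>\<F>" if "finite \<F>" "\<F> \<subseteq> \<U>" for \<F>
    using nf0 that by meson
  have reg: "regular_space X" using crs by (rule completely_regular_imp_regular_space)
  have "\<forall>p\<in>K. \<exists>Ob. Ob \<in> \<U> \<and> p \<in> Ob" using K\<U> by blast
  then obtain Ob where Ob: "\<forall>p\<in>K. Ob p \<in> \<U> \<and> p \<in> Ob p" by (rule bchoice[THEN exE]) 
  have "\<forall>p\<in>K. \<exists>V. openin X V \<and> p \<in> V \<and> X closure_of V \<subseteq> Ob p"
  proof
    fix p assume p: "p \<in> K"
    have Oo: "openin X (Ob p)" using Ob p \<U>o by blast
    have "closedin X (topspace X - Ob p)" using Oo by blast
    moreover have "p \<in> topspace X - (topspace X - Ob p)" using Ob p Kt by blast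
    ultimately obtain V where V: "openin X V" "p \<in> V" "disjnt (topspace X - Ob p) (X closure_of V)"
      using reg unfolding regular_space by blast
    have "X closure_of V \<subseteq> Ob p"
      using V(3) closure_of_subset_topspace[of X V] unfolding disjnt_def by blast
    then show "\<exists>V. openin X V \<and> p \<in> V \<and> X closure_of V \<subseteq> Ob p" using V by blast
  qed
  then obtain V where V: "\<forall>p\<in>K. openin X (V p) \<and> p \<in> V p \<and> X closure_of (V p) \<subseteq> Ob p"
    by (rule bchoice[THEN exE])
  have "\<exists>\<V>. countable \<V> \<and> \<V> \<subseteq> V ` K \<and> K \<subseteq> \<Union>\<V>"
  proof -
    have "\<forall>W\<in>V ` K. openin X W" using V by blast
    moreover have "K \<subseteq> \<Union>(V ` K)" using V by blast
    ultimately show ?thesis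
      using lin unfolding K_def[symmetric] Lindelof_space_subtopology_subset[OF Kt] by blast
  qed
  then obtain \<V> where \<V>c: "countable \<V>" and \<V>V: "\<V> \<subseteq> V ` K" and K\<V>: "K \<subseteq> \<Union>\<V>" by blast
  have Kne: "K \<noteq> {}"
  proof
    assume "K = {}"
    then show False using nf[of "{}"] by simp
  qed
  then have \<V>ne: "\<V> \<noteq> {}" using K\<V> by blast
  define Vn where "Vn = from_nat_into \<V>"
  have rng: "range Vn = \<V>" unfolding Vn_def using \<V>ne \<V>c by simp
  have "\<forall>i. \<exists>p. p \<in> K \<and> Vn i = V p"
  proof
    fix i
    have "Vn i \<in> \<V>" using rng by blast
    then show "\<exists>p. p \<in> K \<and> Vn i = V p" using \<V>V by blast
  qed
  then obtain pt where pt: "\<forall>i. pt i \<in> K \<and> Vn i = V (pt i)" by (rule choice[THEN exE])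
  have Vno: "openin X (Vn i)" for i using pt V by metis
  have Vnt: "Vn i \<subseteq> topspace X" for i using Vno by (rule openin_subset)
  define Wn where "Wn n = (\<Union>i<n. Vn i)" for n
  have Wnt: "Wn n \<subseteq> topspace X" for n unfolding Wn_def using Vnt by blast
  have clVn: "X closure_of Vn i \<subseteq> Ob (pt i)" for i
  proof -
    have "pt i \<in> K" "Vn i = V (pt i)" using pt by auto
    then show ?thesis using V by simp
  qed
  have notsub: "\<not> U \<subseteq> X closure_of Wn n" for n
  proof
    assume sub: "U \<subseteq> X closure_of Wn n"
    have "K \<subseteq> X closure_of (X closure_of Wn n)"
      unfolding K_def using sub by (rule closure_of_mono)
    also have "\<dots> = X closure_of Wn n" by simp
    also have "\<dots> = (\<Union>i<n. X closure_of Vn i)"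
      unfolding Wn_def using closure_of_Union[of "Vn ` {..<n}" X] by simp
    also have "\<dots> \<subseteq> (\<Union>i<n. Ob (pt i))"
      by (rule UN_mono) (simp_all add: clVn)
    finally have "K \<subseteq> \<Union>((\<lambda>i. Ob (pt i)) ` {..<n})" by simp
    moreover have "(\<lambda>i. Ob (pt i)) ` {..<n} \<subseteq> \<U>" using pt Ob by auto
    ultimately show False using nf[OF finite_imageI[OF finite_lessThan]] by meson
  qed
  have "\<forall>n. \<exists>x. x \<in> U \<and> x \<notin> X closure_of Wn n" using notsub by (simp add: subset_iff)
  then obtain xs where xs: "\<forall>n. xs n \<in> U \<and> xs n \<notin> X closure_of Wn n" by (rule choice[THEN exE])
  define G where "G n = U - X closure_of Wn n" for n
  show False
  proof (rule pseudo_lf[OF crs pc])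
    show "openin X (G n)" for n unfolding G_def using U by (intro openin_diff closedin_closure_of)
    show "xs n \<in> G n" for n unfolding G_def using xs by blast
    fix z assume z: "z \<in> topspace X"
    show "\<exists>N F. openin X N \<and> z \<in> N \<and> finite F \<and> (\<forall>y\<in>N. \<forall>n. y \<in> G n \<longrightarrow> n \<in> F)"
    proof (cases "z \<in> K")
      case True
      then obtain j where j: "z \<in> Vn j" using K\<V> rng by blast
      have "\<forall>y\<in>Vn j. \<forall>n. y \<in> G n \<longrightarrow> n \<in> {..j}"
      proof (intro ballI allI impI)
        fix y n assume y: "y \<in> Vn j" and yG: "y \<in> G n"
        show "n \<in> {..j}"
        proof (rule ccontr)
          assume "n \<notin> {..j}"
          then have "j < n" by simp
          then have "y \<in> Wn n" unfolding Wn_def using y by blast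
          then have "y \<in> X closure_of Wn n" using closure_of_subset[OF Wnt] by blast
          then show False using yG unfolding G_def by blast
        qed
      qed
      then show ?thesis using Vno[of j] j finite_atMost[of j] by blast
    next
      case False
      have "openin X (topspace X - K)" using Kcl by blast
      moreover have "\<forall>y\<in>topspace X - K. \<forall>n. y \<in> G n \<longrightarrow> n \<in> {}"
        using UK unfolding G_def by blast
      ultimately show ?thesis using z False finite.emptyI by blast
    qed
  qed
qed


theorem theorem9p5:
  fixes X :: "'a topology" and Y :: "'b topology"
  assumes "Hausdorff_space X" and "completely_regular_space X"
    and "pseudocompact_space X" and "\<not> Lindelof_space X"
    and "Hausdorff_space Y"
  shows "EC_cl X Y \<longleftrightarrow> EC_cpt X Y"
proof
  assume ec: "EC_cl X Y"
  show "EC_cpt X Y" unfolding EC_cpt_def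
  proof (intro allI impI)
    fix f assume f: "continuous_map X Y f"
    from ec f obtain Z y where Zc: "closedin X Z" and Zl: "Lindelof_space (subtopology X Z)"
      and fy: "f ` (topspace X - Z) = {y}"
      unfolding EC_cl_def by blast
    obtain x0 where x0: "x0 \<in> topspace X - Z" "f x0 = y" using fy by (metis imageE insertI1)
    have yY: "y \<in> topspace Y"
      using x0 f continuous_map_image_subset_topspace by fastforce
    have "closedin Y {y}"
      using closedin_t1_singleton[OF Hausdorff_imp_t1_space[OF assms(5)] yY] .
    then have pc: "closedin X {x \<in> topspace X. f x \<in> {y}}"
      by (rule closedin_continuous_map_preimage[OF f])
    define U where "U = {x \<in> topspace X. f x \<noteq> y}"
    have Ueq: "U = topspace X - {x \<in> topspace X. f x \<in> {y}}" unfolding U_def by auto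
    have Uo: "openin X U" unfolding Ueq using pc by blast
    have UZ: "U \<subseteq> Z"
    proof
      fix x assume x: "x \<in> U"
      show "x \<in> Z"
      proof (rule ccontr)
        assume "x \<notin> Z"
        then have "f x \<in> f ` (topspace X - Z)" using x unfolding U_def by blast
        then show False using fy x unfolding U_def by simp
      qed
    qed
    define K where "K = X closure_of U"
    have KZ: "K \<subseteq> Z" unfolding K_def using UZ Zc by (rule closure_of_minimal)
    have UK: "U \<subseteq> K" unfolding K_def U_def by (rule closure_of_subset) auto
    have Kcl: "closedin X K" unfolding K_def by (rule closedin_closure_of)
    have "closedin (subtopology X Z) K"
      unfolding closedin_subtopology using Kcl KZ by blast
    then have "Lindelof_space (subtopology (subtopology X Z) K)"
      using Zl Lindelof_space_closedin_subtopology by blast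
    moreover have "subtopology (subtopology X Z) K = subtopology X K"
      using KZ by (simp add: subtopology_subtopology Int_absorb1)
    ultimately have "Lindelof_space (subtopology X K)" by simp
    then have Kc: "compactin X K"
      unfolding K_def using key_compact[OF assms(2) assms(3) Uo] by blast
    have "f ` (topspace X - K) = {y}"
    proof
      show "f ` (topspace X - K) \<subseteq> {y}" using UK unfolding U_def by blast
      show "{y} \<subseteq> f ` (topspace X - K)" using x0 KZ by blast
    qed
    then show "\<exists>Z. compactin X Z \<and> (\<exists>y. f ` (topspace X - Z) = {y})" using Kc by blast
  qed
next
  assume ec: "EC_cpt X Y"
  show "EC_cl X Y" unfolding EC_cl_def
  proof (intro allI impI)
    fix f assume f: "continuous_map X Y f"
    from ec f obtain Z y where Zc: "compactin X Z" and fy: "f ` (topspace X - Z) = {y}"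
      unfolding EC_cpt_def by blast
    have "closedin X Z" using compactin_imp_closedin[OF assms(1) Zc] .
    moreover have "Lindelof_space (subtopology X Z)"
      using compact_imp_Lindelof_space[OF compact_space_subtopology[OF Zc]] .
    ultimately show "\<exists>Z. closedin X Z \<and> Lindelof_space (subtopology X Z) \<and> (\<exists>y. f ` (topspace X - Z) = {y})"
      using fy by blast
  qed
qed

end
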